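(* Consider the two-unicast wireline network ("butterfly network 2") with nodes $\mathsf{S}_1,\mathsf{S}_2,\mathsf{M}_1,\mathsf{M}_2,\mathsf{D}_1,\mathsf{D}_2$ and seven directed edges: edge 1 from $\mathsf{S}_1$ to $\mathsf{M}_1$, edge 2 from $\mathsf{S}_2$ to $\mathsf{M}_1$, edge 3 from $\mathsf{M}_1$ to $\mathsf{M}_2$, edge 4 from $\mathsf{S}_1$ to $\mathsf{D}_1$, edge 5 from $\mathsf{S}_2$ to $\mathsf{D}_2$, edge 6 from $\mathsf{M}_2$ to $\mathsf{D}_2$, edge 7 from $\mathsf{M}_2$ to $\mathsf{D}_1$, where edge $i$ has capacity $\mathsf{C}_i\ge0$. Then every nonnegative rate pair $(R_1,R_2)$ satisfying $$R_1\le \min\{\mathsf{C}_1,\mathsf{C}_7\}+\min\{R_1,\mathsf{C}_4\},\quad R_2\le \min\{\mathsf{C}_2,\mathsf{C}_6\}+\min\{R_2,\mathsf{C}_5\},$$ $$R_1+R_2\le \mathsf{C}_3+\min\{R_2,\mathsf{C}_5\}+\min\{R_1,\mathsf{C}_4\}$$ is achievable (without security constraints).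
   Context: Network model: a directed acyclic graph; each edge $e$ is a noiseless orthogonal channel of capacity $\mathsf{C}_e$ carrying symbols over $\mathbb{F}_q$; over $n$ channel uses edge $e$ carries $X_e^n$, received as $Y_e^n=X_e^n$. Source $\mathsf{S}_i$ has message $W_i$ (uniform, $q$-ary entropy $nR_i$, $W_1,W_2$ independent) to be decoded at $\mathsf{D}_i$. A rate pair is achievable if for some block length $n$ there are encoding functions—an edge leaving $\mathsf{S}_i$ carries a function of $W_i$, any other edge a function of the symbols received on the incoming edges of its tail—and decoders at $\mathsf{D}_j$ (functions of the symbols on its incoming edges) recovering $W_j$ with vanishing error probability, $j=1,2$. *)

theory Defs
  imports Complex_Main
begin

text \<open>A block code of length n sends the message W_i (a word of k_i
  symbols, uniform) and edge e carries a word of m_e symbols with m_e \<le> n C_e.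
  Encoders: S1 computes X1, X4 from W1; S2 computes X2, X5 from W2; M1 computes X3
  from (X1,X2); M2 computes X6, X7 from X3.
  Error probability = fraction of message pairs on which some decoder errs.\<close>

definition msgs :: "nat \<Rightarrow> 'q list set" where
  "msgs k = {w. length w = k}"

definition butterfly2_achievable ::
  "'q itself \<Rightarrow> (nat \<Rightarrow> real) \<Rightarrow> real \<Rightarrow> real \<Rightarrow> bool" where
  "butterfly2_achievable qty C R1 R2 \<longleftrightarrow>
    (\<forall>\<epsilon>>0. \<exists>n::nat. n > 0 \<and> (\<exists>k1 k2::nat. \<exists>m::nat \<Rightarrow> nat.
      \<exists>f1 f4 :: 'q list \<Rightarrow> 'q list. \<exists>f2 f5 :: 'q list \<Rightarrow> 'q list.
      \<exists>f3 :: 'q list \<Rightarrow> 'q list \<Rightarrow> 'q list. \<exists>f6 f7 :: 'q list \<Rightarrow> 'q list.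
      \<exists>g1 g2 :: 'q list \<Rightarrow> 'q list \<Rightarrow> 'q list.
        real k1 \<ge> real n * (R1 - \<epsilon>) \<and> real k2 \<ge> real n * (R2 - \<epsilon>) \<and>
        (\<forall>e\<in>{1..7::nat}. real (m e) \<le> real n * C e) \<and>
        (\<forall>w1\<in>msgs k1. \<forall>w2\<in>msgs k2.
           length (f1 w1) = m 1 \<and> length (f4 w1) = m 4 \<and>
           length (f2 w2) = m 2 \<and> length (f5 w2) = m 5 \<and>
           length (f3 (f1 w1) (f2 w2)) = m 3 \<and>
           length (f6 (f3 (f1 w1) (f2 w2))) = m 6 \<and>
           length (f7 (f3 (f1 w1) (f2 w2))) = m 7) \<and>
        real (card {(w1, w2). w1 \<in> msgs k1 \<and> w2 \<in> msgs k2 \<and>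
            (g1 (f4 w1) (f7 (f3 (f1 w1) (f2 w2))) \<noteq> w1 \<or>
             g2 (f5 w2) (f6 (f3 (f1 w1) (f2 w2))) \<noteq> w2)})
          \<le> \<epsilon> * real (card ((msgs k1 :: 'q list set) \<times> (msgs k2 :: 'q list set)))))"

end

theory Submission
  imports Defs
begin

lemma fl_le: "x \<ge> 0 \<Longrightarrow> real (nat \<lfloor>x\<rfloor>) \<le> x"
  by linarith
lemma fl_ge: "x \<ge> 0 \<Longrightarrow> real (nat \<lfloor>x\<rfloor>) \<ge> x - 1"
  by linarith

theorem theorem7:
  fixes C :: "nat \<Rightarrow> real" and R1 R2 :: real
  assumes "\<forall>e\<in>{1..7::nat}. C e \<ge> 0"
    and "R1 \<ge> 0" and "R2 \<ge> 0"
    and "R1 \<le> min (C 1) (C 7) + min R1 (C 4)"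
    and "R2 \<le> min (C 2) (C 6) + min R2 (C 5)"
    and "R1 + R2 \<le> C 3 + min R2 (C 5) + min R1 (C 4)"
  shows "butterfly2_achievable (TYPE('q::{finite,field})) C R1 R2"
  unfolding butterfly2_achievable_def
proof (intro allI impI)
  fix \<epsilon> :: real assume ep: "\<epsilon> > 0"
  have C: "C 1 \<ge> 0" "C 2 \<ge> 0" "C 3 \<ge> 0" "C 4 \<ge> 0" "C 5 \<ge> 0" "C 6 \<ge> 0" "C 7 \<ge> 0"
    using assms(1) by auto
  define n :: nat where "n = nat \<lceil>2/\<epsilon>\<rceil> + 1"
  have npos: "n > 0" unfolding n_def by simp
  have "real n \<ge> 2/\<epsilon>" unfolding n_def by linarith
  hence ne: "real n * \<epsilon> \<ge> 2" using ep by (simp add: field_simps)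
  define a1 where "a1 = min R1 (C 4)"
  define a2 where "a2 = min R2 (C 5)"
  define r1 where "r1 = R1 - a1"
  define r2 where "r2 = R2 - a2"
  have h: "a1 \<ge> 0" "a2 \<ge> 0" "r1 \<ge> 0" "r2 \<ge> 0" "a1 \<le> C 4" "a2 \<le> C 5"
    "r1 \<le> C 1" "r1 \<le> C 7" "r2 \<le> C 2" "r2 \<le> C 6" "r1 + r2 \<le> C 3"
    using assms C unfolding a1_def a2_def r1_def r2_def by auto
  define A1 where "A1 = nat \<lfloor>real n * a1\<rfloor>"
  define A2 where "A2 = nat \<lfloor>real n * a2\<rfloor>"
  define B1 where "B1 = nat \<lfloor>real n * r1\<rfloor>"
  define B2 where "B2 = nat \<lfloor>real n * r2\<rfloor>"
  have p: "real n * a1 \<ge> 0" "real n * a2 \<ge> 0" "real n * r1 \<ge> 0" "real n * r2 \<ge> 0"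
    using h by auto
  note L = fl_le[OF p(1)] fl_le[OF p(2)] fl_le[OF p(3)] fl_le[OF p(4)]
  note G = fl_ge[OF p(1)] fl_ge[OF p(2)] fl_ge[OF p(3)] fl_ge[OF p(4)]
  define m :: "nat \<Rightarrow> nat" where "m = (\<lambda>e. if e = 1 then B1 else if e = 2 then B2
     else if e = 3 then B1 + B2 else if e = 4 then A1 else if e = 5 then A2
     else if e = 6 then B2 else B1)"
  have cap: "\<forall>e\<in>{1..7::nat}. real (m e) \<le> real n * C e"
  proof
    fix e :: nat assume "e \<in> {1..7}"
    hence "e = 1 \<or> e = 2 \<or> e = 3 \<or> e = 4 \<or> e = 5 \<or> e = 6 \<or> e = 7" by auto
    moreover have "real n * r1 \<le> real n * C 1" "real n * r1 \<le> real n * C 7"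
      "real n * r2 \<le> real n * C 2" "real n * r2 \<le> real n * C 6"
      "real n * a1 \<le> real n * C 4" "real n * a2 \<le> real n * C 5"
      "real n * (r1 + r2) \<le> real n * C 3"
      using h by (auto intro: mult_left_mono)
    ultimately show "real (m e) \<le> real n * C e"
      using L unfolding m_def A1_def A2_def B1_def B2_def
      by (auto simp: distrib_left)
  qed
  have k1: "real (A1 + B1) \<ge> real n * (R1 - \<epsilon>)"
    using G ne unfolding A1_def B1_def r1_def by (simp add: algebra_simps)
  have k2: "real (A2 + B2) \<ge> real n * (R2 - \<epsilon>)"
    using G ne unfolding A2_def B2_def r2_def by (simp add: algebra_simps)
  let ?f1 = "\<lambda>w::'q list. drop A1 w" and ?f4 = "\<lambda>w::'q list. take A1 w"
  let ?f2 = "\<lambda>w::'q list. drop A2 w" and ?f5 = "\<lambda>w::'q list. take A2 w"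
  let ?f3 = "\<lambda>x y::'q list. x @ y"
  let ?f6 = "\<lambda>z::'q list. drop B1 z" and ?f7 = "\<lambda>z::'q list. take B1 z"
  let ?g = "\<lambda>x y::'q list. x @ y"
  have len: "\<forall>w1\<in>msgs (A1+B1). \<forall>w2\<in>msgs (A2+B2).
           length (?f1 w1) = m 1 \<and> length (?f4 w1) = m 4 \<and>
           length (?f2 w2) = m 2 \<and> length (?f5 w2) = m 5 \<and>
           length (?f3 (?f1 w1) (?f2 w2)) = m 3 \<and>
           length (?f6 (?f3 (?f1 w1) (?f2 w2))) = m 6 \<and>
           length (?f7 (?f3 (?f1 w1) (?f2 w2))) = m 7"
    by (auto simp: msgs_def m_def)
  have empty: "{(w1, w2). w1 \<in> msgs (A1+B1) \<and> w2 \<in> msgs (A2+B2) \<and>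
            (?g (?f4 w1) (?f7 (?f3 (?f1 w1) (?f2 w2))) \<noteq> w1 \<or>
             ?g (?f5 w2) (?f6 (?f3 (?f1 w1) (?f2 w2))) \<noteq> w2)} = {}"
    by (auto simp: msgs_def)
  have fin: "real (card {(w1, w2). w1 \<in> msgs (A1+B1) \<and> w2 \<in> msgs (A2+B2) \<and>
            (?g (?f4 w1) (?f7 (?f3 (?f1 w1) (?f2 w2))) \<noteq> w1 \<or>
             ?g (?f5 w2) (?f6 (?f3 (?f1 w1) (?f2 w2))) \<noteq> w2)})
          \<le> \<epsilon> * real (card ((msgs (A1+B1) :: 'q list set) \<times> (msgs (A2+B2) :: 'q list set)))"
    unfolding empty using ep by simp
  show "\<exists>n::nat. n > 0 \<and> (\<exists>k1 k2::nat. \<exists>m::nat \<Rightarrow> nat.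
      \<exists>f1 f4 :: 'q list \<Rightarrow> 'q list. \<exists>f2 f5 :: 'q list \<Rightarrow> 'q list.
      \<exists>f3 :: 'q list \<Rightarrow> 'q list \<Rightarrow> 'q list. \<exists>f6 f7 :: 'q list \<Rightarrow> 'q list.
      \<exists>g1 g2 :: 'q list \<Rightarrow> 'q list \<Rightarrow> 'q list.
        real k1 \<ge> real n * (R1 - \<epsilon>) \<and> real k2 \<ge> real n * (R2 - \<epsilon>) \<and>
        (\<forall>e\<in>{1..7::nat}. real (m e) \<le> real n * C e) \<and>
        (\<forall>w1\<in>msgs k1. \<forall>w2\<in>msgs k2.
           length (f1 w1) = m 1 \<and> length (f4 w1) = m 4 \<and>
           length (f2 w2) = m 2 \<and> length (f5 w2) = m 5 \<and>
           length (f3 (f1 w1) (f2 w2)) = m 3 \<and>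
           length (f6 (f3 (f1 w1) (f2 w2))) = m 6 \<and>
           length (f7 (f3 (f1 w1) (f2 w2))) = m 7) \<and>
        real (card {(w1, w2). w1 \<in> msgs k1 \<and> w2 \<in> msgs k2 \<and>
            (g1 (f4 w1) (f7 (f3 (f1 w1) (f2 w2))) \<noteq> w1 \<or>
             g2 (f5 w2) (f6 (f3 (f1 w1) (f2 w2))) \<noteq> w2)})
          \<le> \<epsilon> * real (card ((msgs k1 :: 'q list set) \<times> (msgs k2 :: 'q list set))))"
    apply (rule exI[of _ n], rule conjI[OF npos])
    apply (rule exI[of _ "A1+B1"], rule exI[of _ "A2+B2"], rule exI[of _ m])
    apply (rule exI[of _ ?f1], rule exI[of _ ?f4], rule exI[of _ ?f2], rule exI[of _ ?f5])
    apply (rule exI[of _ ?f3], rule exI[of _ ?f6], rule exI[of _ ?f7])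
    apply (rule exI[of _ ?g], rule exI[of _ ?g])
    by (intro conjI k1 k2 cap len fin)
qed

end
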